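(* Let $\mathbb{A}$ be a 2-category and $p:e\to b$ a 1-cell such that $\mathbb{A}$ has the two-dimensional cokernel diagram of $p$. If $p$ has a left adjoint, then a right Kan extension $(t,\gamma)$ of $p$ along $p$ exists and it is preserved by $\delta^0:b\to b\uparrow_pb$. In particular, in the 2-category $\mathbf{Cat}$ of categories, functors and natural transformations (which has the two-dimensional cokernel diagram of every functor), every functor $p$ having a left adjoint has $\mathrm{Ran}_pp$ preserved by $\delta^0$.
   Context: A 2-category is a $\mathbf{Cat}$-enriched category; composition of 1-cells is juxtaposition, vertical composition of 2-cells is $\cdot$, horizontal composition is $\ast$, $\mathrm{id}_f$ is the identity 2-cell on $f$. An adjunction $l\dashv p$ in $\mathbb{A}$ is given by 1-cells $l:b\to e$, $p:e\to b$ and 2-cells $\varepsilon:lp\Rightarrow\mathrm{id}_e$, $\eta:\mathrm{id}_b\Rightarrow pl$ satisfying the triangle identities. Opcomma object of $p$ along itself: an object $b\uparrow_p b$ with 1-cells $\delta^0,\delta^1:b\to b\uparrow_p b$ and a 2-cell $\alpha:\delta^1p\Rightarrow\delta^0p$ such that for every object $y$ the functor $h\mapsto(h\delta^0,h\delta^1,\mathrm{id}_h\ast\alpha)$, $\xi\mapsto(\xi\ast\mathrm{id}_{\delta^0},\xi\ast\mathrm{id}_{\delta^1})$ is an isomorphism from $\mathbb{A}(b\uparrow_p b,y)$ onto the category of triples $(h_0,h_1:b\to y,\ \beta:h_1p\Rightarrow h_0p)$ with morphisms pairs of 2-cells $(\xi_0:h_0\Rightarrow h_0',\xi_1:h_1\Rightarrow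 h_1')$ satisfying $(\xi_0\ast\mathrm{id}_p)\cdot\beta=\beta'\cdot(\xi_1\ast\mathrm{id}_p)$. Two-dimensional pushout of a span $f_0:c\to c_0$, $f_1:c\to c_1$: an object $P$ with $q_0:c_0\to P$, $q_1:c_1\to P$, $q_0f_0=q_1f_1$, such that for every $y$, $k\mapsto(kq_0,kq_1)$ is an isomorphism from $\mathbb{A}(P,y)$ onto the category of pairs $(k_0,k_1)$ with $k_0f_0=k_1f_1$, whose morphisms are pairs of 2-cells $(\xi_0,\xi_1)$ with $\xi_0\ast\mathrm{id}_{f_0}=\xi_1\ast\mathrm{id}_{f_1}$. $\mathbb{A}$ has the two-dimensional cokernel diagram of $p$ if it has an opcomma object $b\uparrow_p b$ of $p$ along itself and a two-dimensional pushout $b\uparrow_pb\uparrow_pb$ of the span $(\delta^0,\delta^1)$, with 1-cells $D^0,D^2$ satisfying $D^2\delta^0=D^0\delta^1$. Right Kan extension of $f:z\to y$ along $g:z\to x$: a pair $(r:x\to y,\gamma:rg\Rightarrow f)$ such that for each $k:x\to y$, $\beta\mapsto\gamma\cdot(\beta\ast\mathrm{id}_g)$ is a bijection from 2-cells $k\Rightarrow r$ to 2-cells $kg\Rightarrow f$. A 1-cell $d:y\to y'$ preserves it if $(dr,\mathrm{id}_d\ast\gamma)$ is a right Kan extension of $df$ along $g$. *)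

theory Defs
  imports Main
begin

text \<open>A (strict) 2-category, i.e. a Cat-enriched category, presented by its cells.
  cmp g f is the composite gf (first f, then g);
  vcmp b a is the vertical composite b . a (first a, then b);
  hcmp b a is the horizontal composite b * a, where a : f => f' and b : g => g'
  with trg f = src g, giving b * a : gf => g'f'.\<close>

record ('o, 'm, 'c) twocat =
  Obj  :: "'o set"
  Arr  :: "'m set"
  src  :: "'m \<Rightarrow> 'o"
  trg  :: "'m \<Rightarrow> 'o"
  idm  :: "'o \<Rightarrow> 'm"
  cmp  :: "'m \<Rightarrow> 'm \<Rightarrow> 'm"
  Cell :: "'c set"
  dom2 :: "'c \<Rightarrow> 'm"
  cod2 :: "'c \<Rightarrow> 'm"
  id2  :: "'m \<Rightarrow> 'c"
  vcmp :: "'c \<Rightarrow> 'c \<Rightarrow> 'c"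
  hcmp :: "'c \<Rightarrow> 'c \<Rightarrow> 'c"

definition hom1 :: "('o, 'm, 'c, 'x) twocat_scheme \<Rightarrow> 'o \<Rightarrow> 'o \<Rightarrow> 'm set" where
  "hom1 C x y = {f \<in> Arr C. src C f = x \<and> trg C f = y}"

definition hom2 :: "('o, 'm, 'c, 'x) twocat_scheme \<Rightarrow> 'm \<Rightarrow> 'm \<Rightarrow> 'c set" where
  "hom2 C f g = {a \<in> Cell C. dom2 C a = f \<and> cod2 C a = g}"

definition two_category :: "('o, 'm, 'c, 'x) twocat_scheme \<Rightarrow> bool" where
  "two_category C \<longleftrightarrow>
    \<comment> \<open>underlying category of objects and 1-cells\<close>
    (\<forall>f\<in>Arr C. src C f \<in> Obj C \<and> trg C f \<in> Obj C) \<and>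
    (\<forall>x\<in>Obj C. idm C x \<in> hom1 C x x) \<and>
    (\<forall>x y z f g. f \<in> hom1 C x y \<longrightarrow> g \<in> hom1 C y z \<longrightarrow> cmp C g f \<in> hom1 C x z) \<and>
    (\<forall>w x y z f g h. f \<in> hom1 C w x \<longrightarrow> g \<in> hom1 C x y \<longrightarrow> h \<in> hom1 C y z \<longrightarrow>
        cmp C h (cmp C g f) = cmp C (cmp C h g) f) \<and>
    (\<forall>f\<in>Arr C. cmp C (idm C (trg C f)) f = f \<and> cmp C f (idm C (src C f)) = f) \<and>
    \<comment> \<open>2-cells are between parallel 1-cells\<close>
    (\<forall>a\<in>Cell C. dom2 C a \<in> Arr C \<and> cod2 C a \<in> Arr C \<and>
        src C (dom2 C a) = src C (cod2 C a) \<and> trg C (dom2 C a) = trg C (cod2 C a)) \<and>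
    \<comment> \<open>vertical composition: each hom is a category\<close>
    (\<forall>f\<in>Arr C. id2 C f \<in> hom2 C f f) \<and>
    (\<forall>f g h a b. a \<in> hom2 C f g \<longrightarrow> b \<in> hom2 C g h \<longrightarrow> vcmp C b a \<in> hom2 C f h) \<and>
    (\<forall>f g h k a b c. a \<in> hom2 C f g \<longrightarrow> b \<in> hom2 C g h \<longrightarrow> c \<in> hom2 C h k \<longrightarrow>
        vcmp C c (vcmp C b a) = vcmp C (vcmp C c b) a) \<and>
    (\<forall>a\<in>Cell C. vcmp C (id2 C (cod2 C a)) a = a \<and> vcmp C a (id2 C (dom2 C a)) = a) \<and>
    \<comment> \<open>horizontal composition: composition is a functor\<close>
    (\<forall>f f' g g' a b. a \<in> hom2 C f f' \<longrightarrow> b \<in> hom2 C g g' \<longrightarrow> trg C f = src C g \<longrightarrow>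
        hcmp C b a \<in> hom2 C (cmp C g f) (cmp C g' f')) \<and>
    (\<forall>f g. f \<in> Arr C \<longrightarrow> g \<in> Arr C \<longrightarrow> trg C f = src C g \<longrightarrow>
        hcmp C (id2 C g) (id2 C f) = id2 C (cmp C g f)) \<and>
    (\<forall>f f' f'' g g' g'' a a' b b'.
        a \<in> hom2 C f f' \<longrightarrow> a' \<in> hom2 C f' f'' \<longrightarrow> b \<in> hom2 C g g' \<longrightarrow> b' \<in> hom2 C g' g'' \<longrightarrow>
        trg C f = src C g \<longrightarrow>
        hcmp C (vcmp C b' b) (vcmp C a' a) = vcmp C (hcmp C b' a') (hcmp C b a)) \<and>
    \<comment> \<open>horizontal composition is associative and unital\<close>
    (\<forall>a b c. a \<in> Cell C \<longrightarrow> b \<in> Cell C \<longrightarrow> c \<in> Cell C \<longrightarrow>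
        trg C (dom2 C a) = src C (dom2 C b) \<longrightarrow> trg C (dom2 C b) = src C (dom2 C c) \<longrightarrow>
        hcmp C c (hcmp C b a) = hcmp C (hcmp C c b) a) \<and>
    (\<forall>a\<in>Cell C. hcmp C (id2 C (idm C (trg C (dom2 C a)))) a = a \<and>
                hcmp C a (id2 C (idm C (src C (dom2 C a)))) = a)"

definition is_adjunction ::
  "('o, 'm, 'c, 'x) twocat_scheme \<Rightarrow> 'm \<Rightarrow> 'm \<Rightarrow> 'c \<Rightarrow> 'c \<Rightarrow> bool" where
  "is_adjunction C l p eps eta \<longleftrightarrow>
    l \<in> hom1 C (trg C p) (src C p) \<and> p \<in> hom1 C (src C p) (trg C p) \<and>
    eps \<in> hom2 C (cmp C l p) (idm C (src C p)) \<and>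
    eta \<in> hom2 C (idm C (trg C p)) (cmp C p l) \<and>
    vcmp C (hcmp C eps (id2 C l)) (hcmp C (id2 C l) eta) = id2 C l \<and>
    vcmp C (hcmp C (id2 C p) eps) (hcmp C eta (id2 C p)) = id2 C p"

text \<open>Opcomma object (q, d0, d1, alpha) of p along itself, alpha : d1 p => d0 p.
  The comparison functor A(q,y) -> triples is an isomorphism of categories: bijective on
  objects and bijective on each set of morphisms.\<close>
definition is_opcomma ::
  "('o, 'm, 'c, 'x) twocat_scheme \<Rightarrow> 'm \<Rightarrow> 'o \<Rightarrow> 'm \<Rightarrow> 'm \<Rightarrow> 'c \<Rightarrow> bool" where
  "is_opcomma C p q d0 d1 \<alpha> \<longleftrightarrow>
    q \<in> Obj C \<and> d0 \<in> hom1 C (trg C p) q \<and> d1 \<in> hom1 C (trg C p) q \<and>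
    \<alpha> \<in> hom2 C (cmp C d1 p) (cmp C d0 p) \<and>
    (\<forall>y\<in>Obj C. \<forall>h0\<in>hom1 C (trg C p) y. \<forall>h1\<in>hom1 C (trg C p) y.
       \<forall>\<beta>\<in>hom2 C (cmp C h1 p) (cmp C h0 p).
         (\<exists>!h. h \<in> hom1 C q y \<and> cmp C h d0 = h0 \<and> cmp C h d1 = h1 \<and>
               hcmp C (id2 C h) \<alpha> = \<beta>)) \<and>
    (\<forall>y\<in>Obj C. \<forall>h\<in>hom1 C q y. \<forall>h'\<in>hom1 C q y.
       \<forall>\<xi>0\<in>hom2 C (cmp C h d0) (cmp C h' d0). \<forall>\<xi>1\<in>hom2 C (cmp C h d1) (cmp C h' d1).
         vcmp C (hcmp C \<xi>0 (id2 C p)) (hcmp C (id2 C h) \<alpha>) =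
         vcmp C (hcmp C (id2 C h') \<alpha>) (hcmp C \<xi>1 (id2 C p)) \<longrightarrow>
         (\<exists>!\<xi>. \<xi> \<in> hom2 C h h' \<and> hcmp C \<xi> (id2 C d0) = \<xi>0 \<and> hcmp C \<xi> (id2 C d1) = \<xi>1))"

definition is_2pushout ::
  "('o, 'm, 'c, 'x) twocat_scheme \<Rightarrow> 'm \<Rightarrow> 'm \<Rightarrow> 'o \<Rightarrow> 'm \<Rightarrow> 'm \<Rightarrow> bool" where
  "is_2pushout C f0 f1 P q0 q1 \<longleftrightarrow>
    f0 \<in> Arr C \<and> f1 \<in> Arr C \<and> src C f0 = src C f1 \<and> P \<in> Obj C \<and>
    q0 \<in> hom1 C (trg C f0) P \<and> q1 \<in> hom1 C (trg C f1) P \<and>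
    cmp C q0 f0 = cmp C q1 f1 \<and>
    (\<forall>y\<in>Obj C. \<forall>k0\<in>hom1 C (trg C f0) y. \<forall>k1\<in>hom1 C (trg C f1) y.
       cmp C k0 f0 = cmp C k1 f1 \<longrightarrow>
       (\<exists>!k. k \<in> hom1 C P y \<and> cmp C k q0 = k0 \<and> cmp C k q1 = k1)) \<and>
    (\<forall>y\<in>Obj C. \<forall>k\<in>hom1 C P y. \<forall>k'\<in>hom1 C P y.
       \<forall>\<xi>0\<in>hom2 C (cmp C k q0) (cmp C k' q0). \<forall>\<xi>1\<in>hom2 C (cmp C k q1) (cmp C k' q1).
         hcmp C \<xi>0 (id2 C f0) = hcmp C \<xi>1 (id2 C f1) \<longrightarrow>
         (\<exists>!\<xi>. \<xi> \<in> hom2 C k k' \<and> hcmp C \<xi> (id2 C q0) = \<xi>0 \<and> hcmp C \<xi> (id2 C q1) = \<xi>1))"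

definition is_ran ::
  "('o, 'm, 'c, 'x) twocat_scheme \<Rightarrow> 'm \<Rightarrow> 'm \<Rightarrow> 'm \<Rightarrow> 'c \<Rightarrow> bool" where
  "is_ran C f g r \<gamma> \<longleftrightarrow>
    f \<in> Arr C \<and> g \<in> Arr C \<and> src C f = src C g \<and>
    r \<in> hom1 C (trg C g) (trg C f) \<and> \<gamma> \<in> hom2 C (cmp C r g) f \<and>
    (\<forall>k\<in>hom1 C (trg C g) (trg C f).
       bij_betw (\<lambda>\<beta>. vcmp C \<gamma> (hcmp C \<beta> (id2 C g))) (hom2 C k r) (hom2 C (cmp C k g) f))"

definition preserves_ran ::
  "('o, 'm, 'c, 'x) twocat_scheme \<Rightarrow> 'm \<Rightarrow> 'm \<Rightarrow> 'm \<Rightarrow> 'm \<Rightarrow> 'c \<Rightarrow> bool" where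
  "preserves_ran C d f g r \<gamma> \<longleftrightarrow>
    d \<in> Arr C \<and> src C d = trg C f \<and>
    is_ran C (cmp C d f) g (cmp C d r) (hcmp C (id2 C d) \<gamma>)"

end

theory Submission
  imports Defs
begin

context
  fixes C :: "('o, 'm, 'c, 'x) twocat_scheme"
  assumes TC: "two_category C"
begin

lemmas tc = TC[unfolded two_category_def]

lemma cmp_hom: "f \<in> hom1 C x y \<Longrightarrow> g \<in> hom1 C y z \<Longrightarrow> cmp C g f \<in> hom1 C x z"
  using tc[THEN conjunct2, THEN conjunct2, THEN conjunct1] by blast
lemma cmp_assoc: "f \<in> hom1 C w x \<Longrightarrow> g \<in> hom1 C x y \<Longrightarrow> h \<in> hom1 C y z \<Longrightarrow>
        cmp C h (cmp C g f) = cmp C (cmp C h g) f"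
  using tc[THEN conjunct2, THEN conjunct2, THEN conjunct2, THEN conjunct1] by blast
lemma cmp_idr: "f \<in> hom1 C x y \<Longrightarrow> cmp C f (idm C x) = f"
  using tc[THEN conjunct2, THEN conjunct2, THEN conjunct2, THEN conjunct2, THEN conjunct1] unfolding hom1_def by blast
lemma cmp_idl: "f \<in> hom1 C x y \<Longrightarrow> cmp C (idm C y) f = f"
  using tc[THEN conjunct2, THEN conjunct2, THEN conjunct2, THEN conjunct2, THEN conjunct1] unfolding hom1_def by blast
lemma idm_hom: "f \<in> hom1 C x y \<Longrightarrow> idm C x \<in> hom1 C x x \<and> idm C y \<in> hom1 C y y"
  using tc[THEN conjunct1] tc[THEN conjunct2, THEN conjunct1] unfolding hom1_def by blast
lemma id2_hom: "f \<in> hom1 C x y \<Longrightarrow> id2 C f \<in> hom2 C f f"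
  using tc[THEN conjunct2, THEN conjunct2, THEN conjunct2, THEN conjunct2, THEN conjunct2, THEN conjunct2, THEN conjunct1] unfolding hom1_def by blast
lemma vcmp_hom: "a \<in> hom2 C f g \<Longrightarrow> b \<in> hom2 C g h \<Longrightarrow> vcmp C b a \<in> hom2 C f h"
  using tc[THEN conjunct2, THEN conjunct2, THEN conjunct2, THEN conjunct2, THEN conjunct2, THEN conjunct2, THEN conjunct2, THEN conjunct1] by blast
lemma vcmp_assoc: "a \<in> hom2 C f g \<Longrightarrow> b \<in> hom2 C g h \<Longrightarrow> c \<in> hom2 C h k \<Longrightarrow>
        vcmp C c (vcmp C b a) = vcmp C (vcmp C c b) a"
  using tc[THEN conjunct2, THEN conjunct2, THEN conjunct2, THEN conjunct2, THEN conjunct2, THEN conjunct2, THEN conjunct2, THEN conjunct2, THEN conjunct1] by blast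
lemma vcmp_idl: "a \<in> hom2 C f g \<Longrightarrow> vcmp C (id2 C g) a = a"
  using tc[THEN conjunct2, THEN conjunct2, THEN conjunct2, THEN conjunct2, THEN conjunct2, THEN conjunct2, THEN conjunct2, THEN conjunct2, THEN conjunct2, THEN conjunct1] unfolding hom2_def by blast
lemma vcmp_idr: "a \<in> hom2 C f g \<Longrightarrow> vcmp C a (id2 C f) = a"
  using tc[THEN conjunct2, THEN conjunct2, THEN conjunct2, THEN conjunct2, THEN conjunct2, THEN conjunct2, THEN conjunct2, THEN conjunct2, THEN conjunct2, THEN conjunct1] unfolding hom2_def by blast
lemma hom2_arr: "a \<in> hom2 C f g \<Longrightarrow> \<exists>x y. f \<in> hom1 C x y \<and> g \<in> hom1 C x y"
  using tc[THEN conjunct2, THEN conjunct2, THEN conjunct2, THEN conjunct2, THEN conjunct2, THEN conjunct1] unfolding hom2_def hom1_def by auto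
lemma hcmp_hom: "a \<in> hom2 C f f' \<Longrightarrow> b \<in> hom2 C g g' \<Longrightarrow> f \<in> hom1 C x y \<Longrightarrow> g \<in> hom1 C y z \<Longrightarrow>
        hcmp C b a \<in> hom2 C (cmp C g f) (cmp C g' f')"
  using tc[THEN conjunct2, THEN conjunct2, THEN conjunct2, THEN conjunct2, THEN conjunct2, THEN conjunct2, THEN conjunct2, THEN conjunct2, THEN conjunct2, THEN conjunct2, THEN conjunct1] unfolding hom1_def by auto
lemma hcmp_id2: "f \<in> hom1 C x y \<Longrightarrow> g \<in> hom1 C y z \<Longrightarrow>
        hcmp C (id2 C g) (id2 C f) = id2 C (cmp C g f)"
  apply (rule tc[THEN conjunct2, THEN conjunct2, THEN conjunct2, THEN conjunct2, THEN conjunct2, THEN conjunct2, THEN conjunct2, THEN conjunct2, THEN conjunct2, THEN conjunct2, THEN conjunct2, THEN conjunct1, rule_format]) by (auto simp: hom1_def)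
lemma interchange: "a \<in> hom2 C f f' \<Longrightarrow> a' \<in> hom2 C f' f'' \<Longrightarrow> b \<in> hom2 C g g' \<Longrightarrow> b' \<in> hom2 C g' g'' \<Longrightarrow>
        f \<in> hom1 C x y \<Longrightarrow> g \<in> hom1 C y z \<Longrightarrow>
        hcmp C (vcmp C b' b) (vcmp C a' a) = vcmp C (hcmp C b' a') (hcmp C b a)"
  apply (rule tc[THEN conjunct2, THEN conjunct2, THEN conjunct2, THEN conjunct2, THEN conjunct2, THEN conjunct2, THEN conjunct2, THEN conjunct2, THEN conjunct2, THEN conjunct2, THEN conjunct2, THEN conjunct2, THEN conjunct1, rule_format]) unfolding hom1_def by auto
lemma hcmp_assoc: "a \<in> hom2 C f f' \<Longrightarrow> b \<in> hom2 C g g' \<Longrightarrow> c \<in> hom2 C h h' \<Longrightarrow>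
        f \<in> hom1 C x y \<Longrightarrow> g \<in> hom1 C y z \<Longrightarrow> h \<in> hom1 C z w \<Longrightarrow>
        hcmp C c (hcmp C b a) = hcmp C (hcmp C c b) a"
  apply (rule tc[THEN conjunct2, THEN conjunct2, THEN conjunct2, THEN conjunct2, THEN conjunct2, THEN conjunct2, THEN conjunct2, THEN conjunct2, THEN conjunct2, THEN conjunct2, THEN conjunct2, THEN conjunct2, THEN conjunct2, THEN conjunct1, rule_format]) unfolding hom1_def hom2_def by auto
lemma hcmp_unitl: "a \<in> hom2 C f f' \<Longrightarrow> f \<in> hom1 C x y \<Longrightarrow> hcmp C (id2 C (idm C y)) a = a"
  using bspec[OF tc[THEN conjunct2, THEN conjunct2, THEN conjunct2, THEN conjunct2, THEN conjunct2, THEN conjunct2, THEN conjunct2, THEN conjunct2, THEN conjunct2, THEN conjunct2, THEN conjunct2, THEN conjunct2, THEN conjunct2, THEN conjunct2], of a] unfolding hom1_def hom2_def by auto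
lemma hcmp_unitr: "a \<in> hom2 C f f' \<Longrightarrow> f \<in> hom1 C x y \<Longrightarrow> hcmp C a (id2 C (idm C x)) = a"
  using bspec[OF tc[THEN conjunct2, THEN conjunct2, THEN conjunct2, THEN conjunct2, THEN conjunct2, THEN conjunct2, THEN conjunct2, THEN conjunct2, THEN conjunct2, THEN conjunct2, THEN conjunct2, THEN conjunct2, THEN conjunct2, THEN conjunct2], of a] unfolding hom1_def hom2_def by auto


lemma adj_ran:
  assumes adj: "is_adjunction C l p \<epsilon> \<eta>" and p: "p \<in> hom1 C e b" and f: "f \<in> hom1 C e y"
  shows "is_ran C f p (cmp C f l) (hcmp C (id2 C f) \<epsilon>)"
proof -
  have se: "src C p = e" "trg C p = b" using p by (auto simp: hom1_def)
  have l: "l \<in> hom1 C b e" and eps: "\<epsilon> \<in> hom2 C (cmp C l p) (idm C e)"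
    and eta: "\<eta> \<in> hom2 C (idm C b) (cmp C p l)"
    and tri1: "vcmp C (hcmp C \<epsilon> (id2 C l)) (hcmp C (id2 C l) \<eta>) = id2 C l"
    and tri2: "vcmp C (hcmp C (id2 C p) \<epsilon>) (hcmp C \<eta> (id2 C p)) = id2 C p"
    using adj se unfolding is_adjunction_def by auto
  have ide: "idm C e \<in> hom1 C e e" and idb: "idm C b \<in> hom1 C b b" using idm_hom[OF p] by auto
  have lp: "cmp C l p \<in> hom1 C e e" using cmp_hom[OF p l] .
  have pl: "cmp C p l \<in> hom1 C b b" using cmp_hom[OF l p] .
  have fl: "cmp C f l \<in> hom1 C b y" using cmp_hom[OF l f] .
  have flp: "cmp C (cmp C f l) p = cmp C f (cmp C l p)" using cmp_assoc[OF p l f] by simp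
  have fe: "cmp C f (idm C e) = f" using cmp_idr[OF f] .
  define \<gamma> where "\<gamma> = hcmp C (id2 C f) \<epsilon>"
  have gam: "\<gamma> \<in> hom2 C (cmp C (cmp C f l) p) f"
    using hcmp_hom[OF eps id2_hom[OF f] lp f] flp fe by (simp add: \<gamma>_def)
  show ?thesis unfolding is_ran_def
  proof (intro conjI ballI)
    show "f \<in> Arr C" "p \<in> Arr C" "src C f = src C p" using f p by (auto simp: hom1_def)
    show "cmp C f l \<in> hom1 C (trg C p) (trg C f)" using fl f se by (auto simp: hom1_def)
    show "hcmp C (id2 C f) \<epsilon> \<in> hom2 C (cmp C (cmp C f l) p) f" using gam by (simp add: \<gamma>_def)
    fix k assume k0: "k \<in> hom1 C (trg C p) (trg C f)"
    have k: "k \<in> hom1 C b y" using k0 f se by (auto simp: hom1_def)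
    have kp: "cmp C k p \<in> hom1 C e y" using cmp_hom[OF p k] .
    define \<Phi> where "\<Phi> = (\<lambda>\<beta>. vcmp C \<gamma> (hcmp C \<beta> (id2 C p)))"
    define \<Psi> where "\<Psi> = (\<lambda>\<sigma>. vcmp C (hcmp C \<sigma> (id2 C l)) (hcmp C (id2 C k) \<eta>))"
    have \<Phi>hom: "\<Phi> \<beta> \<in> hom2 C (cmp C k p) f" if \<beta>: "\<beta> \<in> hom2 C k (cmp C f l)" for \<beta>
      unfolding \<Phi>_def by (rule vcmp_hom[OF hcmp_hom[OF id2_hom[OF p] \<beta> p k] gam])
    have kpl: "cmp C k (cmp C p l) = cmp C (cmp C k p) l" using cmp_assoc[OF l p k] .
    have kb: "cmp C k (idm C b) = k" using cmp_idr[OF k] .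
    have \<Psi>hom: "\<Psi> \<sigma> \<in> hom2 C k (cmp C f l)" if \<sigma>: "\<sigma> \<in> hom2 C (cmp C k p) f" for \<sigma>
    proof -
      have "hcmp C (id2 C k) \<eta> \<in> hom2 C k (cmp C (cmp C k p) l)"
        using hcmp_hom[OF eta id2_hom[OF k] idb k] kpl kb by simp
      moreover have "hcmp C \<sigma> (id2 C l) \<in> hom2 C (cmp C (cmp C k p) l) (cmp C f l)"
        using hcmp_hom[OF id2_hom[OF l] \<sigma> l kp] .
      ultimately show ?thesis unfolding \<Psi>_def by (rule vcmp_hom)
    qed
    have \<Psi>\<Phi>: "\<Psi> (\<Phi> \<beta>) = \<beta>" if \<beta>: "\<beta> \<in> hom2 C k (cmp C f l)" for \<beta>
      proof -
      have flp1: "cmp C (cmp C f l) p \<in> hom1 C e y" using cmp_hom[OF p fl] .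
      have hb: "hcmp C \<beta> (id2 C p) \<in> hom2 C (cmp C k p) (cmp C (cmp C f l) p)"
        using hcmp_hom[OF id2_hom[OF p] \<beta> p k] .
      have idl: "id2 C l \<in> hom2 C l l" using id2_hom[OF l] .
      have e1: "cmp C (cmp C f l) (cmp C p l) = cmp C (cmp C (cmp C f l) p) l"
        using cmp_assoc[OF l p fl] .
      have el: "cmp C (idm C e) l = l" using cmp_idl[OF l] .
      have lb: "cmp C l (idm C b) = l" using cmp_idr[OF l] .
      have flb: "cmp C (cmp C f l) (idm C b) = cmp C f l" using cmp_idr[OF fl] .
      have lpl: "cmp C l (cmp C p l) = cmp C (cmp C l p) l" using cmp_assoc[OF l p l] .
      have A1: "hcmp C \<gamma> (id2 C l) \<in> hom2 C (cmp C (cmp C (cmp C f l) p) l) (cmp C f l)"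
        using hcmp_hom[OF idl gam l flp1] .
      have A2: "hcmp C \<beta> (id2 C (cmp C p l)) \<in> hom2 C (cmp C (cmp C k p) l) (cmp C (cmp C (cmp C f l) p) l)"
        using hcmp_hom[OF id2_hom[OF pl] \<beta> pl k] kpl e1 by simp
      have K: "hcmp C (id2 C k) \<eta> \<in> hom2 C k (cmp C (cmp C k p) l)"
        using hcmp_hom[OF eta id2_hom[OF k] idb k] kpl kb by simp
      have B: "hcmp C (id2 C (cmp C f l)) \<eta> \<in> hom2 C (cmp C f l) (cmp C (cmp C (cmp C f l) p) l)"
        using hcmp_hom[OF eta id2_hom[OF fl] idb fl] e1 flb by simp
      have X: "hcmp C \<epsilon> (id2 C l) \<in> hom2 C (cmp C (cmp C l p) l) l"
        using hcmp_hom[OF idl eps l lp] el by simp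
      have Y: "hcmp C (id2 C l) \<eta> \<in> hom2 C l (cmp C (cmp C l p) l)"
        using hcmp_hom[OF eta idl idb l] lb lpl by simp
      have s1: "hcmp C (\<Phi> \<beta>) (id2 C l) = vcmp C (hcmp C \<gamma> (id2 C l)) (hcmp C (hcmp C \<beta> (id2 C p)) (id2 C l))"
        using interchange[OF idl idl hb gam l kp] vcmp_idl[OF idl] by (simp add: \<Phi>_def)
      have s2: "hcmp C (hcmp C \<beta> (id2 C p)) (id2 C l) = hcmp C \<beta> (id2 C (cmp C p l))"
        using hcmp_assoc[OF idl id2_hom[OF p] \<beta> l p k] hcmp_id2[OF l p] by simp
      have s3: "vcmp C (hcmp C \<beta> (id2 C (cmp C p l))) (hcmp C (id2 C k) \<eta>) = hcmp C \<beta> \<eta>"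
        using interchange[OF eta id2_hom[OF pl] id2_hom[OF k] \<beta> idb k] vcmp_idr[OF \<beta>] vcmp_idl[OF eta] by simp
      have s4: "hcmp C \<beta> \<eta> = vcmp C (hcmp C (id2 C (cmp C f l)) \<eta>) \<beta>"
        using interchange[OF id2_hom[OF idb] eta \<beta> id2_hom[OF fl] idb k] vcmp_idl[OF \<beta>] vcmp_idr[OF eta]
          hcmp_unitr[OF \<beta> k] by simp
      have s5a: "hcmp C \<gamma> (id2 C l) = hcmp C (id2 C f) (hcmp C \<epsilon> (id2 C l))"
        using hcmp_assoc[OF idl eps id2_hom[OF f] l lp f] by (simp add: \<gamma>_def)
      have s5b: "hcmp C (id2 C (cmp C f l)) \<eta> = hcmp C (id2 C f) (hcmp C (id2 C l) \<eta>)"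
        using hcmp_assoc[OF eta idl id2_hom[OF f] idb l f] hcmp_id2[OF l f] by simp
      have s6: "vcmp C (hcmp C \<gamma> (id2 C l)) (hcmp C (id2 C (cmp C f l)) \<eta>) = id2 C (cmp C f l)"
        using interchange[OF Y X id2_hom[OF f] id2_hom[OF f] l f] vcmp_idl[OF id2_hom[OF f]] tri1
          hcmp_id2[OF l f] s5a s5b by simp
      have "\<Psi> (\<Phi> \<beta>) = vcmp C (vcmp C (hcmp C \<gamma> (id2 C l)) (hcmp C \<beta> (id2 C (cmp C p l)))) (hcmp C (id2 C k) \<eta>)"
        unfolding \<Psi>_def s1 s2 ..
      also have "\<dots> = vcmp C (hcmp C \<gamma> (id2 C l)) (vcmp C (hcmp C \<beta> (id2 C (cmp C p l))) (hcmp C (id2 C k) \<eta>))"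
        using vcmp_assoc[OF K A2 A1] by simp
      also have "\<dots> = vcmp C (hcmp C \<gamma> (id2 C l)) (vcmp C (hcmp C (id2 C (cmp C f l)) \<eta>) \<beta>)"
        using s3 s4 by simp
      also have "\<dots> = vcmp C (id2 C (cmp C f l)) \<beta>"
        using vcmp_assoc[OF \<beta> B A1] s6 by simp
      also have "\<dots> = \<beta>" using vcmp_idl[OF \<beta>] .
      finally show ?thesis .
    qed
    have \<Phi>\<Psi>: "\<Phi> (\<Psi> \<sigma>) = \<sigma>" if \<sigma>: "\<sigma> \<in> hom2 C (cmp C k p) f" for \<sigma>
      proof -
      have idl: "id2 C l \<in> hom2 C l l" using id2_hom[OF l] .
      have idp: "id2 C p \<in> hom2 C p p" using id2_hom[OF p] .
      have K: "hcmp C (id2 C k) \<eta> \<in> hom2 C k (cmp C (cmp C k p) l)"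
        using hcmp_hom[OF eta id2_hom[OF k] idb k] kpl kb by simp
      have S: "hcmp C \<sigma> (id2 C l) \<in> hom2 C (cmp C (cmp C k p) l) (cmp C f l)"
        using hcmp_hom[OF idl \<sigma> l kp] .
      have e2: "cmp C (cmp C k p) (cmp C l p) = cmp C (cmp C (cmp C k p) l) p"
        using cmp_assoc[OF p l kp] .
      have ee: "cmp C (cmp C k p) (idm C e) = cmp C k p" using cmp_idr[OF kp] .
      have bp: "cmp C (idm C b) p = p" using cmp_idl[OF p] .
      have pe: "cmp C p (idm C e) = p" using cmp_idr[OF p] .
      have plp: "cmp C p (cmp C l p) = cmp C (cmp C p l) p" using cmp_assoc[OF p l p] .
      have T1: "hcmp C (hcmp C (id2 C k) \<eta>) (id2 C p) \<in> hom2 C (cmp C k p) (cmp C (cmp C k p) (cmp C l p))"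
        using hcmp_hom[OF idp K p k] e2 by simp
      have T2: "hcmp C \<sigma> (id2 C (cmp C l p)) \<in> hom2 C (cmp C (cmp C k p) (cmp C l p)) (cmp C (cmp C f l) p)"
        using hcmp_hom[OF id2_hom[OF lp] \<sigma> lp kp] flp by simp
      have E: "hcmp C (id2 C (cmp C k p)) \<epsilon> \<in> hom2 C (cmp C (cmp C k p) (cmp C l p)) (cmp C k p)"
        using hcmp_hom[OF eps id2_hom[OF kp] lp kp] ee by simp
      have Ea: "hcmp C \<eta> (id2 C p) \<in> hom2 C p (cmp C p (cmp C l p))"
        using hcmp_hom[OF idp eta p idb] bp plp by simp
      have Eb: "hcmp C (id2 C p) \<epsilon> \<in> hom2 C (cmp C p (cmp C l p)) p"
        using hcmp_hom[OF eps idp lp p] pe by simp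
      have t1: "hcmp C (\<Psi> \<sigma>) (id2 C p) = vcmp C (hcmp C (hcmp C \<sigma> (id2 C l)) (id2 C p)) (hcmp C (hcmp C (id2 C k) \<eta>) (id2 C p))"
        using interchange[OF idp idp K S p k] vcmp_idl[OF idp] by (simp add: \<Psi>_def)
      have t2: "hcmp C (hcmp C \<sigma> (id2 C l)) (id2 C p) = hcmp C \<sigma> (id2 C (cmp C l p))"
        using hcmp_assoc[OF idp idl \<sigma> p l kp] hcmp_id2[OF p l] by simp
      have t3: "vcmp C \<gamma> (hcmp C \<sigma> (id2 C (cmp C l p))) = hcmp C \<sigma> \<epsilon>"
        using interchange[OF id2_hom[OF lp] eps \<sigma> id2_hom[OF f] lp kp] vcmp_idl[OF \<sigma>] vcmp_idr[OF eps]
        by (simp add: \<gamma>_def)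
      have t4: "hcmp C \<sigma> \<epsilon> = vcmp C \<sigma> (hcmp C (id2 C (cmp C k p)) \<epsilon>)"
        using interchange[OF eps id2_hom[OF ide] id2_hom[OF kp] \<sigma> lp kp] vcmp_idr[OF \<sigma>] vcmp_idl[OF eps]
          hcmp_unitr[OF \<sigma> kp] by simp
      have t5a: "hcmp C (id2 C (cmp C k p)) \<epsilon> = hcmp C (id2 C k) (hcmp C (id2 C p) \<epsilon>)"
        using hcmp_assoc[OF eps idp id2_hom[OF k] lp p k] hcmp_id2[OF p k] by simp
      have t5b: "hcmp C (hcmp C (id2 C k) \<eta>) (id2 C p) = hcmp C (id2 C k) (hcmp C \<eta> (id2 C p))"
        using hcmp_assoc[OF idp eta id2_hom[OF k] p idb k] by simp
      have t6: "vcmp C (hcmp C (id2 C (cmp C k p)) \<epsilon>) (hcmp C (hcmp C (id2 C k) \<eta>) (id2 C p)) = id2 C (cmp C k p)"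
        using interchange[OF Ea Eb id2_hom[OF k] id2_hom[OF k] p k] vcmp_idl[OF id2_hom[OF k]] tri2
          hcmp_id2[OF p k] t5a t5b by simp
      have "\<Phi> (\<Psi> \<sigma>) = vcmp C \<gamma> (vcmp C (hcmp C \<sigma> (id2 C (cmp C l p))) (hcmp C (hcmp C (id2 C k) \<eta>) (id2 C p)))"
        unfolding \<Phi>_def t1 t2 ..
      also have "\<dots> = vcmp C (hcmp C \<sigma> \<epsilon>) (hcmp C (hcmp C (id2 C k) \<eta>) (id2 C p))"
        using vcmp_assoc[OF T1 T2 gam] t3 by simp
      also have "\<dots> = vcmp C \<sigma> (id2 C (cmp C k p))"
        using vcmp_assoc[OF T1 E \<sigma>] t4 t6 by simp
      also have "\<dots> = \<sigma>" using vcmp_idr[OF \<sigma>] .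
      finally show ?thesis .
    qed
    have "bij_betw \<Phi> (hom2 C k (cmp C f l)) (hom2 C (cmp C k p) f)"
      by (rule bij_betw_byWitness[where f'=\<Psi>]) (use \<Phi>hom \<Psi>hom \<Psi>\<Phi> \<Phi>\<Psi> in auto)
    then show "bij_betw (\<lambda>\<beta>. vcmp C (hcmp C (id2 C f) \<epsilon>) (hcmp C \<beta> (id2 C p)))
         (hom2 C k (cmp C f l)) (hom2 C (cmp C k p) f)" by (simp add: \<Phi>_def \<gamma>_def)
  qed
qed

end

theorem proposition4p3:
  fixes C :: "('o, 'm, 'c) twocat"
  assumes "two_category C"
    and "p \<in> hom1 C e b"
    and "is_opcomma C p q \<delta>0 \<delta>1 \<alpha>"
    and "is_2pushout C \<delta>0 \<delta>1 P D2 D0"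
    and "\<exists>l \<epsilon> \<eta>. is_adjunction C l p \<epsilon> \<eta>"
  shows "\<exists>t \<gamma>. is_ran C p p t \<gamma> \<and> preserves_ran C \<delta>0 p p t \<gamma>"
proof -
  note TC = assms(1) and p = assms(2)
  obtain l \<epsilon> \<eta> where adj: "is_adjunction C l p \<epsilon> \<eta>" using assms(5) by blast
  have se: "src C p = e" "trg C p = b" using p by (auto simp: hom1_def)
  have l: "l \<in> hom1 C b e" and eps: "\<epsilon> \<in> hom2 C (cmp C l p) (idm C e)"
    using adj se unfolding is_adjunction_def by auto
  have d0: "\<delta>0 \<in> hom1 C b q"
    using assms(3)[unfolded is_opcomma_def, THEN conjunct2, THEN conjunct1] se by simp
  have lp: "cmp C l p \<in> hom1 C e e" using cmp_hom[OF TC p l] .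
  have d0p: "cmp C \<delta>0 p \<in> hom1 C e q" using cmp_hom[OF TC p d0] .
  have r1: "is_ran C p p (cmp C p l) (hcmp C (id2 C p) \<epsilon>)"
    using adj_ran[OF TC adj p p] .
  have r2: "is_ran C (cmp C \<delta>0 p) p (cmp C (cmp C \<delta>0 p) l) (hcmp C (id2 C (cmp C \<delta>0 p)) \<epsilon>)"
    using adj_ran[OF TC adj p d0p] .
  have a1: "cmp C \<delta>0 (cmp C p l) = cmp C (cmp C \<delta>0 p) l" using cmp_assoc[OF TC l p d0] .
  have a2: "hcmp C (id2 C \<delta>0) (hcmp C (id2 C p) \<epsilon>) = hcmp C (id2 C (cmp C \<delta>0 p)) \<epsilon>"
    using hcmp_assoc[OF TC eps id2_hom[OF TC p] id2_hom[OF TC d0] lp p d0] hcmp_id2[OF TC p d0] by simp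
  have "preserves_ran C \<delta>0 p p (cmp C p l) (hcmp C (id2 C p) \<epsilon>)"
    unfolding preserves_ran_def using d0 se r2 a1 a2 by (auto simp: hom1_def)
  with r1 show ?thesis by blast
qed

end
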